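(* Let $A \in \mathbb{R}^{M\times N}$ with $M,N$ powers of two, $K = MN$, $k=\log_2 K$, row-major entries $a_z$ ($z = iN+j$), and let $T_{h,p} = \sum_{z = pK/2^h}^{(p+1)K/2^h - 1} |a_z|^2$ ($0\le h\le k$, $0\le p<2^h$) be its segment tree of squared norms. Suppose a Bucket Brigade QRAM stores $K$ memory cells $\{\ket{L_z}\}_{z=0}^{K-1}$ of $1+2t$ qubits each, with $\ket{L_0} = \ket{\mathrm{s}(a_0)}\ket{T_{0,0}}^t\ket{b}^t$ ($b$ an arbitrary $t$-bit string) and $\ket{L_z} = \ket{\mathrm{s}(a_z)}\ket{T_{l(z),2d(z)}}^t\ket{T_{l(z),2d(z)+1}}^t$ for $1\le z\le K-1$, where $l(z) = \lfloor\log_2 z\rfloor + 1$, $d(z) = z - 2^{\lfloor \log_2 z\rfloor}$, $\mathrm{s}(a_z) = 0$ if $a_z\ge 0$ and $1$ if $a_z<0$, and values are $t$-bit fixed-point basis encodings. The BBQRAM retrieval is $\ket{z}^k\ket{0}^{1+2t} \mapsto \ket{z}^k\ket{L_z}^{1+2t}$ for $0 \le z < K$ (extended linearly to superpositions, and allowing only designated sub-registers of the cell to be copied into the working register). Then this memory layout enables the following retrievals, for arbitrary nonzero coefficients $\alpha_z \in \mathbb{C}$: (1) ($h=0$) $\ket{0}^k\ket{0}^1\ket{0}^t\ket{0}^t \mapsto \ket{0}^k\ket{0}^1\ket{T_{0,0}}^t\ket{0}^t$; (2) for every $1 \le h \le k$: $\sum_{z=2^{h-1}}^{2^h-1}\alpha_z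 \ket{z}^k \ket{0}^1\ket{0}^{2t} \mapsto \sum_{z=2^{h-1}}^{2^h-1} \alpha_z\ket{z}^k\ket{0}^1\ket{T_{l(z),2d(z)}}^t\ket{T_{l(z),2d(z)+1}}^t$, where $\ket{z}^k$ for $z<2^h$ is $\ket{0}^{k-h}\ket{z}^h$; these are exactly the sibling pairs at height $h$ of $T$; (3) $\sum_{z=0}^{K-1}\alpha_z\ket{z}^k\ket{0}^1\ket{0}^t\ket{0}^t \mapsto \sum_{z=0}^{K-1}\alpha_z \ket{z}^k\ket{\mathrm{s}(a_z)}^1\ket{0}^t\ket{0}^t$.
   Context: $\ket{\psi}^s$ denotes an $s$-qubit register; $\ket{z}^k$ is the $k$-bit binary (basis) encoding of the integer $z$ with most significant qubit leftmost. The Bucket Brigade QRAM is a binary tree of routing switches whose leaves are memory cells storing classical bit strings in the computational basis, queried coherently by an address register. *)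

theory Defs
  imports "HOL-Analysis.Analysis"
begin

text \<open>Basis states of the joint register (address, sign qubit, first t-bit register,
 second t-bit register) are tuples of naturals (z, s, u, v), each component being the
 integer whose binary encoding is the register content.\<close>

type_synonym qstate = "nat \<times> nat \<times> nat \<times> nat \<Rightarrow> complex"

definition rowmajor :: "nat \<Rightarrow> (nat \<Rightarrow> nat \<Rightarrow> real) \<Rightarrow> nat \<Rightarrow> real" where
  "rowmajor N A z = A (z div N) (z mod N)"

definition segT :: "nat \<Rightarrow> (nat \<Rightarrow> real) \<Rightarrow> nat \<Rightarrow> nat \<Rightarrow> real" where
  "segT K a h p = (\<Sum>z \<in> {p * K div 2^h ..< (p + 1) * K div 2^h}. \<bar>a z\<bar>^2)"

definition lev :: "nat \<Rightarrow> nat" where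
  "lev z = nat \<lfloor>log 2 (real z)\<rfloor> + 1"

definition dd :: "nat \<Rightarrow> nat" where
  "dd z = z - 2 ^ nat \<lfloor>log 2 (real z)\<rfloor>"

definition sgnbit :: "real \<Rightarrow> nat" where
  "sgnbit x = (if x \<ge> 0 then 0 else 1)"

text \<open>The memory layout: cell L_z = (sign bit, first t-bit value, second t-bit value);
 enc is the t-bit fixed-point basis encoding, b the arbitrary t-bit string in L_0.\<close>
definition cell :: "nat \<Rightarrow> (nat \<Rightarrow> real) \<Rightarrow> (real \<Rightarrow> nat) \<Rightarrow> nat \<Rightarrow> nat \<Rightarrow> nat \<times> nat \<times> nat" where
  "cell K a enc b z =
     (if z = 0 then (sgnbit (a 0), enc (segT K a 0 0), b)
      else (sgnbit (a z), enc (segT K a (lev z) (2 * dd z)), enc (segT K a (lev z) (2 * dd z + 1))))"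

text \<open>BBQRAM retrieval with a msk selecting which sub-registers of the cell are copied
 (cs: sign qubit, c1: first t-bit register, c2: second t-bit register).  On a basis state
 with the selected working sub-registers equal to 0 it acts as |z>|0> -> |z>|L_z (selected parts)>;
 the standard (unitary, linear) extension XORs the cell contents into the working register.\<close>
definition qram ::
  "nat \<Rightarrow> (nat \<Rightarrow> nat \<times> nat \<times> nat) \<Rightarrow> bool \<times> bool \<times> bool \<Rightarrow> qstate \<Rightarrow> qstate" where
  "qram K L msk \<psi> = (\<lambda>(z, s, u, v).
     (case msk of (cs, c1, c2) \<Rightarrow>
      (case L z of (ls, l1, l2) \<Rightarrow>
        if z < K then
          \<psi> (z, xor s (if cs then ls else 0), xor u (if c1 then l1 else 0),
                xor v (if c2 then l2 else 0))
        else \<psi> (z, s, u, v))))"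

definition superpos ::
  "nat set \<Rightarrow> (nat \<Rightarrow> complex) \<Rightarrow> (nat \<Rightarrow> nat) \<Rightarrow> (nat \<Rightarrow> nat) \<Rightarrow> (nat \<Rightarrow> nat) \<Rightarrow> qstate" where
  "superpos S \<alpha> fs fu fv = (\<lambda>(z, s, u, v).
     if z \<in> S \<and> s = fs z \<and> u = fu z \<and> v = fv z then \<alpha> z else 0)"

end

theory Submission
  imports Defs
begin

lemma xor_nat_zero_iff: "xor (x::nat) y = 0 \<longleftrightarrow> x = y"
proof
  assume "xor x y = 0"
  moreover have "x = xor (xor x y) y" by (simp add: xor.assoc)
  ultimately show "x = y" by simp
qed simp

lemma floor_log_pow: "2^j \<le> z \<Longrightarrow> z < 2^(j+1) \<Longrightarrow> nat \<lfloor>log 2 (real z)\<rfloor> = j"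
  using floor_log_nat_eq_if[of 2 j z] by simp

lemma lev_dd:
  assumes "h \<ge> 1" "2^(h-1) \<le> z" "z < (2::nat)^h"
  shows "lev z = h" "dd z = z - 2^(h-1)"
proof -
  have "nat \<lfloor>log 2 (real z)\<rfloor> = h - 1" using assms by (intro floor_log_pow) auto
  then show "lev z = h" "dd z = z - 2^(h-1)" using assms by (auto simp: lev_def dd_def)
qed

lemma sp_out: "z \<notin> S \<Longrightarrow> superpos S \<alpha> fs fu fv (z, s, u, v) = 0"
  by (simp add: superpos_def)

lemma qram_out: "z \<notin> S \<Longrightarrow> qram K L msk (superpos S \<alpha> fs fu fv) (z, s, u, v) = 0"
  unfolding qram_def by (simp add: sp_out split: prod.splits)

lemma qram_in: "z < K \<Longrightarrow> L z = (ls, l1, l2) \<Longrightarrow>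
  qram K L (cs, c1, c2) \<psi> (z, s, u, v) =
   \<psi> (z, xor s (if cs then ls else 0), xor u (if c1 then l1 else 0), xor v (if c2 then l2 else 0))"
  by (simp add: qram_def)

theorem corollary4p2:
  fixes M N K k m n t b :: nat
    and A :: "nat \<Rightarrow> nat \<Rightarrow> real"
    and enc :: "real \<Rightarrow> nat"
  assumes hM: "M = 2 ^ m" and hN: "N = 2 ^ n"
    and hK: "K = M * N" and hk: "k = m + n"
    and henc: "\<forall>x. enc x < 2 ^ t"
    and hb: "b < 2 ^ t"
  defines "a \<equiv> rowmajor N A"
  defines "L \<equiv> cell K a enc b"
  shows
    "qram K L (False, True, False) (superpos {0} (\<lambda>_. 1) (\<lambda>_. 0) (\<lambda>_. 0) (\<lambda>_. 0))
       = superpos {0} (\<lambda>_. 1) (\<lambda>_. 0) (\<lambda>_. enc (segT K a 0 0)) (\<lambda>_. 0)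
     \<and> (\<forall>h \<in> {1..k}. \<forall>\<alpha> :: nat \<Rightarrow> complex. (\<forall>z. \<alpha> z \<noteq> 0) \<longrightarrow>
          qram K L (False, True, True) (superpos {2^(h-1)..<2^h} \<alpha> (\<lambda>_. 0) (\<lambda>_. 0) (\<lambda>_. 0))
          = superpos {2^(h-1)..<2^h} \<alpha> (\<lambda>_. 0)
              (\<lambda>z. enc (segT K a (lev z) (2 * dd z)))
              (\<lambda>z. enc (segT K a (lev z) (2 * dd z + 1))))
     \<and> (\<forall>h \<in> {1..k}. bij_betw (\<lambda>z. (lev z, dd z)) {2^(h-1)..<2^h} ({h} \<times> {..<2^(h-1)}))
     \<and> (\<forall>\<alpha> :: nat \<Rightarrow> complex. (\<forall>z. \<alpha> z \<noteq> 0) \<longrightarrow>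
          qram K L (True, False, False) (superpos {..<K} \<alpha> (\<lambda>_. 0) (\<lambda>_. 0) (\<lambda>_. 0))
          = superpos {..<K} \<alpha> (\<lambda>z. sgnbit (a z)) (\<lambda>_. 0) (\<lambda>_. 0))"
proof (intro conjI ballI allI impI)
  have K: "K = 2^k" using hM hN hK hk by (simp add: power_add)
  have Kpos: "0 < K" using K by simp
  show "qram K L (False, True, False) (superpos {0} (\<lambda>_. 1) (\<lambda>_. 0) (\<lambda>_. 0) (\<lambda>_. 0))
       = superpos {0} (\<lambda>_. 1) (\<lambda>_. 0) (\<lambda>_. enc (segT K a 0 0)) (\<lambda>_. 0)"
    unfolding fun_eq_iff
  proof clarify
    fix z s u v :: nat
    show "qram K L (False, True, False) (superpos {0} (\<lambda>_. 1) (\<lambda>_. 0) (\<lambda>_. 0) (\<lambda>_. 0)) (z,s,u,v)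
       = superpos {0} (\<lambda>_. 1) (\<lambda>_. 0) (\<lambda>_. enc (segT K a 0 0)) (\<lambda>_. 0) (z,s,u,v)"
    proof (cases "z = 0")
      case True
      have Lz: "L z = (sgnbit (a 0), enc (segT K a 0 0), b)" using True by (simp add: L_def cell_def)
      have zK: "z < K" using True Kpos by simp
      show ?thesis unfolding qram_in[where L=L, OF zK Lz] using True by (simp add: superpos_def xor_nat_zero_iff)
    next
      case False
      then show ?thesis by (simp add: qram_out sp_out)
    qed
  qed
  fix h assume h: "h \<in> {1..k}"
  {
    fix \<alpha> :: "nat \<Rightarrow> complex"
    have sub: "z < K" if "z < 2^h" for z
    proof -
      have "(2::nat)^h \<le> 2^k" using h by (intro power_increasing) auto
      then show ?thesis using that K by linarith
    qed
    have pos: "z \<noteq> 0" if "2^(h-1) \<le> z" for z :: nat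
    proof -
      have "0 < (2::nat)^(h-1)" by simp
      then show ?thesis using that by linarith
    qed
    show "qram K L (False, True, True) (superpos {2^(h-1)..<2^h} \<alpha> (\<lambda>_. 0) (\<lambda>_. 0) (\<lambda>_. 0))
          = superpos {2^(h-1)..<2^h} \<alpha> (\<lambda>_. 0)
              (\<lambda>z. enc (segT K a (lev z) (2 * dd z)))
              (\<lambda>z. enc (segT K a (lev z) (2 * dd z + 1)))"
      unfolding fun_eq_iff
    proof (clarify)
      fix z s u v
      show "qram K L (False, True, True) (superpos {2^(h-1)..<2^h} \<alpha> (\<lambda>_. 0) (\<lambda>_. 0) (\<lambda>_. 0)) (z,s,u,v)
          = superpos {2^(h-1)..<2^h} \<alpha> (\<lambda>_. 0)
              (\<lambda>z. enc (segT K a (lev z) (2 * dd z)))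
              (\<lambda>z. enc (segT K a (lev z) (2 * dd z + 1))) (z,s,u,v)"
      proof (cases "z \<in> {2^(h-1)..<2^h}")
        case True
        have Lz: "L z = (sgnbit (a z), enc (segT K a (lev z) (2 * dd z)), enc (segT K a (lev z) (2 * dd z + 1)))"
        proof -
          have "z \<noteq> 0" using True pos by auto
          then show ?thesis by (simp add: L_def cell_def)
        qed
        have zK: "z < K" using sub True by auto
        show ?thesis unfolding qram_in[where L=L, OF zK Lz] using True by (simp add: superpos_def xor_nat_zero_iff)
      next
        case False
        then show ?thesis by (simp add: qram_out sp_out)
      qed
    qed
  }
  show "bij_betw (\<lambda>z. (lev z, dd z)) {2^(h-1)..<2^h} ({h} \<times> {..<2^(h-1)})"
  proof (rule bij_betw_imageI)
    show "inj_on (\<lambda>z. (lev z, dd z)) {2^(h-1)..<2^h}"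
    proof (rule inj_onI)
      fix x y assume x: "x \<in> {2^(h-1)..<(2::nat)^h}" and y: "y \<in> {2^(h-1)..<(2::nat)^h}"
        and eq: "(lev x, dd x) = (lev y, dd y)"
      have "dd x = x - 2^(h-1)" using x h by (intro lev_dd(2)) auto
      moreover have "dd y = y - 2^(h-1)" using y h by (intro lev_dd(2)) auto
      ultimately have "x - 2^(h-1) = y - 2^(h-1)" using eq by simp
      then show "x = y" using x y by (metis atLeastLessThan_iff le_add_diff_inverse)
    qed
    show "(\<lambda>z. (lev z, dd z)) ` {2 ^ (h - 1)..<2 ^ h} = {h} \<times> {..<2 ^ (h - 1)}"
    proof
      show "(\<lambda>z. (lev z, dd z)) ` {2 ^ (h - 1)..<2 ^ h} \<subseteq> {h} \<times> {..<2 ^ (h - 1)}"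
      proof (rule image_subsetI)
        fix z assume z: "z \<in> {2 ^ (h - 1)..<(2::nat) ^ h}"
        have e: "(2::nat)^h = 2 * 2^(h-1)" using h by (cases h) auto
        show "(lev z, dd z) \<in> {h} \<times> {..<2 ^ (h - 1)}" using z h lev_dd[of h z] e by auto
      qed
      show "{h} \<times> {..<2 ^ (h - 1)} \<subseteq> (\<lambda>z. (lev z, dd z)) ` {2 ^ (h - 1)..<2 ^ h}"
      proof (rule subsetI, elim SigmaE)
        fix p x y assume p: "p = (x, y)" and x: "x \<in> {h}" and y: "y \<in> {..<(2::nat)^(h-1)}"
        have y: "y < 2^(h-1)" using y by simp
        have e: "(2::nat)^h = 2 * 2^(h-1)" using h by (cases h) auto
        let ?z = "2^(h-1) + y"
        have "?z \<in> {2 ^ (h - 1)..<2 ^ h}" using y e by auto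
        moreover have "(h, y) = (lev ?z, dd ?z)" using lev_dd[of h ?z] h y e by auto
        ultimately show "p \<in> (\<lambda>z. (lev z, dd z)) ` {2 ^ (h - 1)..<2 ^ h}" using p x by blast
      qed
    qed
  qed
next
  fix \<alpha> :: "nat \<Rightarrow> complex"
  show "qram K L (True, False, False) (superpos {..<K} \<alpha> (\<lambda>_. 0) (\<lambda>_. 0) (\<lambda>_. 0))
          = superpos {..<K} \<alpha> (\<lambda>z. sgnbit (a z)) (\<lambda>_. 0) (\<lambda>_. 0)"
    unfolding fun_eq_iff
  proof clarify
    fix z s u v :: nat
    have "fst (L z) = sgnbit (a z)" by (simp add: L_def cell_def)
    then obtain y w where Lz: "L z = (sgnbit (a z), y, w)" by (cases "L z") auto
    show "qram K L (True, False, False) (superpos {..<K} \<alpha> (\<lambda>_. 0) (\<lambda>_. 0) (\<lambda>_. 0)) (z,s,u,v)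
          = superpos {..<K} \<alpha> (\<lambda>z. sgnbit (a z)) (\<lambda>_. 0) (\<lambda>_. 0) (z,s,u,v)"
    proof (cases "z < K")
      case True
      have "qram K L (True, False, False) (superpos {..<K} \<alpha> (\<lambda>_. 0) (\<lambda>_. 0) (\<lambda>_. 0)) (z,s,u,v)
          = superpos {..<K} \<alpha> (\<lambda>_. 0) (\<lambda>_. 0) (\<lambda>_. 0) (z, xor s (sgnbit (a z)), u, v)"
        using Lz True by (simp add: qram_def)
      also have "\<dots> = superpos {..<K} \<alpha> (\<lambda>z. sgnbit (a z)) (\<lambda>_. 0) (\<lambda>_. 0) (z,s,u,v)"
        unfolding superpos_def using True by (simp add: xor_nat_zero_iff)
      finally show ?thesis .
    next
      case False
      then show ?thesis by (simp add: qram_out sp_out)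
    qed
  qed
qed

end
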